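(* If $C\subseteq\mathbb{R}$ is infinite and $|\mathbb{R}\setminus C|=\mathfrak{c}$, then there is a two-point selection $f$ on $\mathbb{R}$ such that $C$ is not closed in $\tau_f$ and $C$ is not a $G_\delta$-set in $\tau_f$.
   Context: $\mathfrak{c}=|\mathbb{R}|$. A two-point selection on $\mathbb{R}$ is a function $f$ from the set of two-element subsets of $\mathbb{R}$ to $\mathbb{R}$ with $f(F)\in F$. Write $r<_f s$ if $f(\{r,s\})=r$ ($r\ne s$), $(\leftarrow,r)_f=\{x: x<_f r\}$, $(r,\rightarrow)_f=\{x: r<_f x\}$. The topology $\tau_f$ on $\mathbb{R}$ is generated (as a subbase) by all sets $(\leftarrow,r)_f$, $(r,\rightarrow)_f$, $r\in\mathbb{R}$. A $G_\delta$-set is a countable intersection of open sets. *)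

theory Defs
  imports "HOL-Analysis.Analysis"
begin

definition two_point_selection :: "(real set \<Rightarrow> real) \<Rightarrow> bool" where
  "two_point_selection f \<longleftrightarrow> (\<forall>F. card F = 2 \<longrightarrow> f F \<in> F)"

definition sel_less :: "(real set \<Rightarrow> real) \<Rightarrow> real \<Rightarrow> real \<Rightarrow> bool" where
  "sel_less f r s \<longleftrightarrow> r \<noteq> s \<and> f {r, s} = r"

definition sel_left_ray :: "(real set \<Rightarrow> real) \<Rightarrow> real \<Rightarrow> real set" where
  "sel_left_ray f r = {x. sel_less f x r}"

definition sel_right_ray :: "(real set \<Rightarrow> real) \<Rightarrow> real \<Rightarrow> real set" where
  "sel_right_ray f r = {x. sel_less f r x}"

definition sel_topology :: "(real set \<Rightarrow> real) \<Rightarrow> real topology" where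
  "sel_topology f = topology_generated_by
     ((\<lambda>r. sel_left_ray f r) ` UNIV \<union> (\<lambda>r. sel_right_ray f r) ` UNIV)"

end

theory Submission
  imports Defs
begin

section \<open>Selections from tournaments\<close>

definition tsel :: "(real \<Rightarrow> real \<Rightarrow> bool) \<Rightarrow> real set \<Rightarrow> real" where
  "tsel B F = (SOME x. x \<in> F \<and> (\<forall>y\<in>F. y \<noteq> x \<longrightarrow> B x y))"

lemma tsel_pair:
  assumes asym: "\<And>x y. B x y \<Longrightarrow> \<not> B y x"
    and tot: "\<And>x y. x \<noteq> y \<Longrightarrow> B x y \<or> B y x"
    and "x \<noteq> y"
  shows "tsel B {x, y} \<in> {x, y}" "tsel B {x, y} = x \<longleftrightarrow> B x y"
proof -
  have ex: "\<exists>z. z \<in> {x, y} \<and> (\<forall>w\<in>{x, y}. w \<noteq> z \<longrightarrow> B z w)"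
    using tot[OF assms(3)] by auto
  have *: "tsel B {x, y} \<in> {x, y} \<and> (\<forall>w\<in>{x, y}. w \<noteq> tsel B {x, y} \<longrightarrow> B (tsel B {x, y}) w)"
    unfolding tsel_def by (rule someI_ex[OF ex])
  then show "tsel B {x, y} \<in> {x, y}" by blast
  show "tsel B {x, y} = x \<longleftrightarrow> B x y"
  proof
    assume "tsel B {x, y} = x" then show "B x y" using * assms(3) by auto
  next
    assume "B x y"
    then have "\<not> B y x" using asym by blast
    then show "tsel B {x, y} = x" using * assms(3) by auto
  qed
qed

lemma tsel_props:
  assumes asym: "\<And>x y. B x y \<Longrightarrow> \<not> B y x"
    and tot: "\<And>x y. x \<noteq> y \<Longrightarrow> B x y \<or> B y x"
  shows "two_point_selection (tsel B)" "sel_less (tsel B) r s \<longleftrightarrow> r \<noteq> s \<and> B r s"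
proof -
  show "two_point_selection (tsel B)"
    unfolding two_point_selection_def
  proof (intro allI impI)
    fix F :: "real set" assume "card F = 2"
    then obtain x y where "F = {x, y}" "x \<noteq> y" by (auto simp: card_2_iff)
    then show "tsel B F \<in> F" using tsel_pair[where B=B, OF asym tot] by blast
  qed
  show "sel_less (tsel B) r s \<longleftrightarrow> r \<noteq> s \<and> B r s"
    unfolding sel_less_def using tsel_pair(2)[where B=B, OF asym tot] by blast
qed

definition nb :: "(real set \<Rightarrow> real) \<Rightarrow> real set \<Rightarrow> real set \<Rightarrow> real set" where
  "nb f L R = (\<Inter>r\<in>L. sel_left_ray f r) \<inter> (\<Inter>r\<in>R. sel_right_ray f r)"

lemma nb_Un: "nb f (L1 \<union> L2) (R1 \<union> R2) = nb f L1 R1 \<inter> nb f L2 R2"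
  unfolding nb_def by auto

lemma basic_nbhd0:
  assumes "openin (sel_topology f) U" "x \<in> U"
  shows "\<exists>L R. finite L \<and> finite R \<and> x \<in> nb f L R \<and> nb f L R \<subseteq> U"
proof -
  have g: "generate_topology_on
     ((\<lambda>r. sel_left_ray f r) ` UNIV \<union> (\<lambda>r. sel_right_ray f r) ` UNIV) U"
    using assms(1) unfolding sel_topology_def by (rule openin_topology_generated_by)
  have "\<forall>x\<in>U. \<exists>L R. finite L \<and> finite R \<and> x \<in> nb f L R \<and> nb f L R \<subseteq> U"
    using g
  proof (induction rule: generate_topology_on.induct)
    case Empty
    then show ?case by simp
  next
    case (Int a b)
    show ?case
    proof
      fix x assume x: "x \<in> a \<inter> b"
      then have "x \<in> a" "x \<in> b" by auto
      obtain L1 R1 where 1: "finite L1" "finite R1" "x \<in> nb f L1 R1" "nb f L1 R1 \<subseteq> a"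
        using Int.IH(1) \<open>x \<in> a\<close> by blast
      obtain L2 R2 where 2: "finite L2" "finite R2" "x \<in> nb f L2 R2" "nb f L2 R2 \<subseteq> b"
        using Int.IH(2) \<open>x \<in> b\<close> by blast
      have "finite (L1 \<union> L2)" "finite (R1 \<union> R2)" using 1 2 by auto
      moreover have "x \<in> nb f (L1 \<union> L2) (R1 \<union> R2)" using 1 2 nb_Un by blast
      moreover have "nb f (L1 \<union> L2) (R1 \<union> R2) \<subseteq> a \<inter> b" using 1 2 nb_Un by blast
      ultimately show "\<exists>L R. finite L \<and> finite R \<and> x \<in> nb f L R \<and> nb f L R \<subseteq> a \<inter> b"
        by blast
    qed
  next
    case (UN K)
    show ?case
    proof
      fix x assume "x \<in> \<Union>K"
      then obtain k where k: "k \<in> K" "x \<in> k" by blast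
      then obtain L R where "finite L" "finite R" "x \<in> nb f L R" "nb f L R \<subseteq> k"
        using UN.IH by blast
      then show "\<exists>L R. finite L \<and> finite R \<and> x \<in> nb f L R \<and> nb f L R \<subseteq> \<Union>K"
        using k(1) by blast
    qed
  next
    case (Basis s)
    show ?case
    proof
      fix x assume "x \<in> s"
      from Basis consider r where "s = sel_left_ray f r" | r where "s = sel_right_ray f r" by blast
      then show "\<exists>L R. finite L \<and> finite R \<and> x \<in> nb f L R \<and> nb f L R \<subseteq> s"
      proof cases
        case 1
        then have "nb f {r} {} = s" unfolding nb_def by simp
        then show ?thesis using \<open>x \<in> s\<close> by (intro exI[of _ "{r}"] exI[of _ "{}"]) simp
      next
        case 2
        then have "nb f {} {r} = s" unfolding nb_def by simp
        then show ?thesis using \<open>x \<in> s\<close> by (intro exI[of _ "{}"] exI[of _ "{r}"]) simp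
      qed
    qed
  qed
  then show ?thesis using assms(2) by blast
qed

lemma basic_nbhd:
  assumes "openin (sel_topology f) U" "x \<in> U"
  shows "\<exists>L R. finite L \<and> finite R \<and> x \<in> (\<Inter>r\<in>L. sel_left_ray f r) \<inter> (\<Inter>r\<in>R. sel_right_ray f r)
           \<and> (\<Inter>r\<in>L. sel_left_ray f r) \<inter> (\<Inter>r\<in>R. sel_right_ray f r) \<subseteq> U"
  using basic_nbhd0[OF assms] unfolding nb_def .

lemma topspace_sel: "topspace (sel_topology f) = \<Union>((\<lambda>r. sel_left_ray f r) ` UNIV \<union> (\<lambda>r. sel_right_ray f r) ` UNIV)"
  unfolding sel_topology_def by simp

lemma not_closed:
  assumes "q \<notin> C" "sel_less f d q" "\<And>r. \<not> sel_less f q r"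
    and fin: "\<And>R. finite R \<Longrightarrow> \<exists>c\<in>C. \<forall>r\<in>R. r \<noteq> q \<longrightarrow> sel_less f r c"
  shows "\<not> closedin (sel_topology f) C"
proof
  assume "closedin (sel_topology f) C"
  then have op: "openin (sel_topology f) (topspace (sel_topology f) - C)"
    by (simp add: closedin_def)
  have "q \<in> topspace (sel_topology f)"
    unfolding topspace_sel using assms(2) by (auto simp: sel_right_ray_def)
  then have qin: "q \<in> topspace (sel_topology f) - C" using assms(1) by blast
  obtain L R where LR: "finite L" "finite R" "q \<in> nb f L R" "nb f L R \<subseteq> topspace (sel_topology f) - C"
    using basic_nbhd0[OF op qin] by blast
  have "L = {}"
  proof (rule ccontr)
    assume "L \<noteq> {}"
    then obtain r where "r \<in> L" by blast
    then have "q \<in> sel_left_ray f r" using LR(3) unfolding nb_def by blast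
    then show False using assms(3) unfolding sel_left_ray_def by blast
  qed
  obtain c where c: "c \<in> C" "\<forall>r\<in>R. r \<noteq> q \<longrightarrow> sel_less f r c" using fin[OF LR(2)] by blast
  have "r \<noteq> q" if "r \<in> R" for r
  proof -
    have "q \<in> sel_right_ray f r" using LR(3) that unfolding nb_def by blast
    then show ?thesis unfolding sel_right_ray_def sel_less_def by blast
  qed
  then have "c \<in> sel_right_ray f r" if "r \<in> R" for r
    using c(2) that unfolding sel_right_ray_def by blast
  then have "c \<in> nb f L R"
    using \<open>L = {}\<close> unfolding nb_def by blast
  then show False using LR(4) c(1) by blast
qed

lemma not_gdelta:
  assumes "d \<in> C" "\<And>r. \<not> sel_less f r d"
    and cnt: "\<And>R. countable R \<Longrightarrow> \<exists>x. x \<notin> C \<and> sel_less f d x \<and> (\<forall>r\<in>R. r \<noteq> d \<longrightarrow> sel_less f x r)"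
  shows "\<not> gdelta_in (sel_topology f) C"
proof
  assume "gdelta_in (sel_topology f) C"
  then obtain \<U> where U: "countable \<U>" "\<U> \<subseteq> Collect (openin (sel_topology f))"
    "topspace (sel_topology f) \<inter> \<Inter>\<U> = C"
    unfolding gdelta_in_def intersection_of_def relative_to_def by blast
  have "\<exists>L. finite L \<and> (\<Inter>r\<in>L. sel_left_ray f r) \<subseteq> U \<and> d \<notin> L" if UU: "U \<in> \<U>" for U
  proof -
    have op: "openin (sel_topology f) U" using U(2) UU by blast
    have dU: "d \<in> U" using U(3) assms(1) UU by blast
    obtain L R where LR: "finite L" "finite R" "d \<in> nb f L R" "nb f L R \<subseteq> U"
      using basic_nbhd0[OF op dU] by blast
    have "R = {}"
    proof (rule ccontr)
      assume "R \<noteq> {}"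
      then obtain r where "r \<in> R" by blast
      then have "d \<in> sel_right_ray f r" using LR(3) unfolding nb_def by blast
      then show False using assms(2) unfolding sel_right_ray_def by blast
    qed
    have "d \<notin> L"
    proof
      assume "d \<in> L"
      then have "d \<in> sel_left_ray f d" using LR(3) unfolding nb_def by blast
      then show False unfolding sel_left_ray_def sel_less_def by blast
    qed
    moreover have "(\<Inter>r\<in>L. sel_left_ray f r) \<subseteq> U"
      using LR(4) \<open>R = {}\<close> unfolding nb_def by simp
    ultimately show ?thesis using LR(1) by blast
  qed
  then obtain Lf where Lf: "\<And>U. U \<in> \<U> \<Longrightarrow> finite (Lf U) \<and> (\<Inter>r\<in>Lf U. sel_left_ray f r) \<subseteq> U \<and> d \<notin> Lf U"
    by metis
  have "countable (\<Union>U\<in>\<U>. Lf U)"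
    using U(1) Lf by (intro countable_UN) (auto intro: countable_finite)
  then obtain x where x: "x \<notin> C" "sel_less f d x" "\<forall>r\<in>(\<Union>U\<in>\<U>. Lf U). r \<noteq> d \<longrightarrow> sel_less f x r"
    using cnt by blast
  have "x \<in> topspace (sel_topology f)"
    unfolding topspace_sel using x(2) by (auto simp: sel_right_ray_def)
  moreover have "x \<in> U" if "U \<in> \<U>" for U
  proof -
    have "x \<in> sel_left_ray f r" if "r \<in> Lf U" for r
    proof -
      have "r \<noteq> d" using Lf[OF \<open>U \<in> \<U>\<close>] that by blast
      then show ?thesis using x(3) that \<open>U \<in> \<U>\<close> unfolding sel_left_ray_def by blast
    qed
    then have "x \<in> (\<Inter>r\<in>Lf U. sel_left_ray f r)" by blast
    then show ?thesis using Lf[OF that] by blast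
  qed
  ultimately have "x \<in> C" using U(3) by blast
  then show False using x(1) by blast
qed

definition cmp :: "nat set \<Rightarrow> nat \<Rightarrow> nat set" where
  "cmp A k = {m. prod_encode (k, m) \<in> A}"

definition encs :: "(nat set \<Rightarrow> real) \<Rightarrow> real \<Rightarrow> real set" where
  "encs e x = range (\<lambda>k. e (cmp (inv e x) (Suc k)))"

definition Dm :: "(nat set \<Rightarrow> real) \<Rightarrow> real \<Rightarrow> real \<Rightarrow> bool" where
  "Dm e x y \<longleftrightarrow> y \<in> encs e x \<and> x \<notin> encs e y"

definition gC :: "(nat \<Rightarrow> real) \<Rightarrow> real \<Rightarrow> real" where
  "gC a x = (if x \<in> range a then real (inv a x) else - exp x)"

definition Bt :: "real set \<Rightarrow> real \<Rightarrow> real \<Rightarrow> (nat \<Rightarrow> real) \<Rightarrow> (nat set \<Rightarrow> real) \<Rightarrow> real \<Rightarrow> real \<Rightarrow> bool" where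
  "Bt C d q a e x y \<longleftrightarrow> x \<noteq> y \<and> (x = d \<or> (y \<noteq> d \<and> (y = q \<or> (x \<noteq> q \<and>
     ((x \<notin> C \<and> y \<in> C) \<or> (x \<in> C \<and> y \<in> C \<and> gC a x < gC a y) \<or>
      (x \<notin> C \<and> y \<notin> C \<and> (Dm e x y \<or> (\<not> Dm e y x \<and> x < y))))))))"

lemma gC_inj:
  assumes "inj a" "gC a x = gC a y"
  shows "x = y"
proof (cases "x \<in> range a")
  case True
  then obtain i where i: "x = a i" by blast
  show ?thesis
  proof (cases "y \<in> range a")
    case True
    then obtain j where "y = a j" by blast
    then show ?thesis using assms i by (simp add: gC_def inv_f_f)
  next
    case False
    then show ?thesis using assms i \<open>x \<in> range a\<close> unfolding gC_def
      by (smt (verit) exp_gt_zero of_nat_0_le_iff)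
  qed
next
  case False
  show ?thesis
  proof (cases "y \<in> range a")
    case True
    then show ?thesis using assms False unfolding gC_def
      by (smt (verit) exp_gt_zero of_nat_0_le_iff)
  next
    case F2: False
    then show ?thesis using assms False unfolding gC_def by simp
  qed
qed

lemma Bt_asym:
  assumes "d \<in> C" "q \<notin> C" "Bt C d q a e x y"
  shows "\<not> Bt C d q a e y x"
  using assms unfolding Bt_def Dm_def by auto

lemma Bt_tot:
  assumes "d \<in> C" "q \<notin> C" "inj a" "x \<noteq> y"
  shows "Bt C d q a e x y \<or> Bt C d q a e y x"
proof -
  have "gC a x \<noteq> gC a y" using gC_inj[OF assms(3)] assms(4) by blast
  then show ?thesis using assms unfolding Bt_def by auto
qed

lemma uncountable_natsets: "uncountable (UNIV :: nat set set)"
proof -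
  obtain g :: "nat set \<Rightarrow> real" where "bij_betw g UNIV UNIV"
    using nat_sets_eqpoll_reals unfolding eqpoll_def by blast
  then show ?thesis using uncountable_bij_betw uncountable_UNIV_real by blast
qed

theorem theorem3p17:
  fixes C :: "real set"
  assumes "infinite C"
    and "(UNIV - C) \<approx> (UNIV :: real set)"
  shows "\<exists>f. two_point_selection f \<and>
           \<not> closedin (sel_topology f) C \<and> \<not> gdelta_in (sel_topology f) C"
proof -
  obtain d where d: "d \<in> C" using assms(1) by (metis ex_in_conv finite.emptyI)
  have "infinite (C - {d})" using assms(1) by simp
  then obtain a :: "nat \<Rightarrow> real" where a: "inj a" "range a \<subseteq> C - {d}"
    using infinite_countable_subset by blast
  have "(UNIV :: nat set set) \<approx> (UNIV - C)"
    using nat_sets_eqpoll_reals assms(2) eqpoll_sym eqpoll_trans by blast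
  then obtain e :: "nat set \<Rightarrow> real" where e: "bij_betw e UNIV (UNIV - C)"
    unfolding eqpoll_def by blast
  have einj: "inj e" and erange: "range e = UNIV - C"
    using e by (auto simp: bij_betw_def)
  define q where "q = e {}"
  have q: "q \<notin> C" using erange q_def by blast
  define B where "B = Bt C d q a e"
  have asym: "\<And>x y. B x y \<Longrightarrow> \<not> B y x" using Bt_asym[OF d q] B_def by blast
  have tot: "\<And>x y. x \<noteq> y \<Longrightarrow> B x y \<or> B y x" using Bt_tot[OF d q a(1)] B_def by blast
  define f where "f = tsel B"
  have tps: "two_point_selection f" using tsel_props(1)[where B=B, OF asym tot] unfolding f_def .
  have Bne: "\<And>r s. B r s \<Longrightarrow> r \<noteq> s" unfolding B_def Bt_def by simp
  have sl: "\<And>r s. sel_less f r s \<longleftrightarrow> B r s"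
    using tsel_props(2)[where B=B, OF asym tot] Bne unfolding f_def by metis
  have nc: "\<not> closedin (sel_topology f) C"
  proof (rule not_closed[OF q])
    show "sel_less f d q" unfolding sl B_def Bt_def using d q by auto
    show "\<And>r. \<not> sel_less f q r" unfolding sl B_def Bt_def using d q by auto
    fix R :: "real set" assume "finite R"
    then obtain n where n: "\<forall>m\<in>inv a ` R. m < n"
      using finite_nat_set_iff_bounded by blast
    define c where "c = a n"
    have c: "c \<in> C" "c \<noteq> d" "c \<noteq> q" using a c_def q by auto
    have gc: "gC a c = real n" unfolding gC_def c_def using a(1) by (simp add: inv_f_f)
    have "sel_less f r c" if "r \<in> R" "r \<noteq> q" for r
    proof -
      have rc: "r \<noteq> c"
      proof
        assume "r = c"
        then have "inv a r = n" using c_def a(1) by (simp add: inv_f_f)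
        then show False using n that by auto
      qed
      have "gC a r < gC a c" if "r \<in> C"
      proof (cases "r \<in> range a")
        case True
        then obtain i where "r = a i" by blast
        then have "inv a r = i" using a(1) by (simp add: inv_f_f)
        then show ?thesis using n \<open>r \<in> R\<close> gc True unfolding gC_def by auto
      next
        case False
        then show ?thesis using gc unfolding gC_def
          by (smt (verit) exp_gt_zero of_nat_0_le_iff)
      qed
      then show ?thesis unfolding sl B_def Bt_def using rc c that by auto
    qed
    then show "\<exists>c\<in>C. \<forall>r\<in>R. r \<noteq> q \<longrightarrow> sel_less f r c" using c(1) by blast
  qed
  have ng: "\<not> gdelta_in (sel_topology f) C"
  proof (rule not_gdelta[OF d])
    show "\<And>r. \<not> sel_less f r d" unfolding sl B_def Bt_def using d q by auto
    fix R :: "real set" assume "countable R"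
    define T where "T = insert q (R - C)"
    have T: "T \<noteq> {}" "countable T" "T \<subseteq> UNIV - C"
      using \<open>countable R\<close> q T_def by auto
    define h where "h = from_nat_into T"
    have rh: "range h = T" using range_from_nat_into[OF T(1,2)] h_def by simp
    define Aof where "Aof = (\<lambda>X::nat set. {p. case prod_decode p of (k, m) \<Rightarrow>
       (if k = 0 then m \<in> X else m \<in> inv e (h (k - 1)))})"
    have c0: "cmp (Aof X) 0 = X" for X unfolding cmp_def Aof_def by simp
    have cS: "cmp (Aof X) (Suc k) = inv e (h k)" for X k unfolding cmp_def Aof_def by simp
    define xs where "xs = (\<lambda>X. e (Aof X))"
    have invx: "inv e (xs X) = Aof X" for X unfolding xs_def using einj by (simp add: inv_f_f)
    have encx: "encs e (xs X) = T" for X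
    proof -
      have "e (inv e (h k)) = h k" for k
        using rh T(3) erange by (metis f_inv_into_f rangeI subsetD)
      then show ?thesis unfolding encs_def invx cS using rh by simp
    qed
    have injx: "inj xs"
    proof
      fix X Y assume "xs X = xs Y"
      then have "Aof X = Aof Y" using invx by metis
      then show "X = Y" using c0 by metis
    qed
    define K where "K = insert q R \<union> (\<Union>r\<in>R - C. encs e r)"
    have "countable K" unfolding K_def encs_def using \<open>countable R\<close> by auto
    have "\<exists>X. xs X \<notin> K"
    proof (rule ccontr)
      assume "\<not> ?thesis"
      then have "range xs \<subseteq> K" by blast
      then have "countable (range xs)" using \<open>countable K\<close> countable_subset by blast
      then have "countable (UNIV :: nat set set)"
        using countable_image_inj_on injx by blast
      then show False using uncountable_natsets by blast
    qed
    then obtain X where X: "xs X \<notin> K" by blast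
    define x where "x = xs X"
    have xC: "x \<notin> C" using erange x_def xs_def by blast
    have "B x r" if "r \<in> R" "r \<noteq> d" for r
    proof -
      have "x \<noteq> r" "x \<noteq> q" using X that unfolding x_def K_def by auto
      moreover have "r \<notin> C \<Longrightarrow> r \<noteq> q \<Longrightarrow> Dm e x r"
        using X that encx unfolding Dm_def x_def K_def T_def by auto
      ultimately show ?thesis using xC that d unfolding B_def Bt_def by auto
    qed
    moreover have "B d x" using xC d unfolding B_def Bt_def by auto
    ultimately show "\<exists>x. x \<notin> C \<and> sel_less f d x \<and> (\<forall>r\<in>R. r \<noteq> d \<longrightarrow> sel_less f x r)"
      using xC sl by blast
  qed
  show ?thesis using tps nc ng by blast
qed

end
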